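(* Let $j_1'$ be the first positive zero of $J_1'$. For every fixed $t\in(0,j_1')$, the function $s\mapsto \frac{J_s(t)}{tJ_s'(t)}$ satisfies $$\frac{d}{ds}\Big(\frac{J_s(t)}{tJ_s'(t)}\Big)<0$$ for all real $s\ge1$.
   Context: $J_s$ denotes the Bessel function of the first kind of order $s$, and $J_s'$ its derivative with respect to its argument. *)

theory Defs
  imports "HOL-Analysis.Analysis"
begin

text \<open>Bessel function of the first kind of real order s, for t > 0:
  J_s(t) = sum_k (-1)^k / (k! Gamma(k+s+1)) (t/2)^(2k+s),
  written with the reciprocal Gamma function (entire, so no poles issue).\<close>
definition besselJ :: "real \<Rightarrow> real \<Rightarrow> real" where
  "besselJ s t = (\<Sum>k. (-1) ^ k * rGamma (real k + s + 1) / fact k * (t / 2) powr (2 * real k + s))"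

definition besselJ' :: "real \<Rightarrow> real \<Rightarrow> real" where
  "besselJ' s t = deriv (besselJ s) t"

definition j1' :: real where
  "j1' = Inf {x. 0 < x \<and> besselJ' 1 x = 0}"

end

theory Submission
  imports Defs
begin


definition p :: "real \<Rightarrow> nat \<Rightarrow> real" where
  "p \<sigma> k = 1 / (fact k * pochhammer (\<sigma>+1) k)"
definition cf :: "real \<Rightarrow> nat \<Rightarrow> real" where
  "cf \<sigma> k = (-1)^k * p \<sigma> k"
definition SS :: "real \<Rightarrow> nat \<Rightarrow> real" where
  "SS \<sigma> k = (\<Sum>j<k. 1/(\<sigma>+1+real j))"
definition G :: "real \<Rightarrow> real \<Rightarrow> real" where
  "G \<sigma> u = (\<Sum>k. cf \<sigma> k * u^k)"
definition Gu :: "real \<Rightarrow> real \<Rightarrow> real" where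
  "Gu \<sigma> u = (\<Sum>k. diffs (cf \<sigma>) k * u^k)"
definition Gs :: "real \<Rightarrow> real \<Rightarrow> real" where
  "Gs \<sigma> u = (\<Sum>k. - cf \<sigma> k * SS \<sigma> k * u^k)"
definition Gus :: "real \<Rightarrow> real \<Rightarrow> real" where
  "Gus \<sigma> u = (\<Sum>k. - diffs (cf \<sigma>) k * SS \<sigma> (Suc k) * u^k)"

lemma poch_ge1: "\<sigma> \<ge> 0 \<Longrightarrow> pochhammer (\<sigma>+1) k \<ge> (1::real)"
proof (induction k)
  case (Suc k)
  have "(1::real) * 1 \<le> pochhammer (\<sigma>+1) k * (\<sigma>+1+real k)"
    using Suc by (intro mult_mono) auto
  then show ?case by (simp add: pochhammer_Suc)
qed simp

lemma p_pos: "\<sigma> \<ge> 0 \<Longrightarrow> p \<sigma> k > 0"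
  unfolding p_def using poch_ge1[of \<sigma> k] by simp

lemma p_le: "\<sigma> \<ge> 0 \<Longrightarrow> p \<sigma> k \<le> 1 / fact k"
  unfolding p_def using poch_ge1[of \<sigma> k]
  by (simp add: divide_simps)

lemma p_Suc: "\<sigma> \<ge> 0 \<Longrightarrow> p \<sigma> (Suc k) = p \<sigma> k / ((real k + 1) * (\<sigma> + 1 + real k))"
  unfolding p_def by (simp add: pochhammer_Suc field_simps)

lemma SS_nonneg: "\<sigma> \<ge> 0 \<Longrightarrow> SS \<sigma> k \<ge> 0"
  unfolding SS_def by (intro sum_nonneg) auto

lemma SS_le: "\<sigma> \<ge> 0 \<Longrightarrow> SS \<sigma> k \<le> real k"
proof -
  assume "\<sigma> \<ge> 0"
  then have "SS \<sigma> k \<le> (\<Sum>j<k. 1)" unfolding SS_def by (intro sum_mono) auto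
  then show ?thesis by simp
qed

lemma SS_Suc: "SS \<sigma> (Suc k) = SS \<sigma> k + 1/(\<sigma>+1+real k)"
  unfolding SS_def by simp

lemma summ_cf: "\<sigma> \<ge> 0 \<Longrightarrow> summable (\<lambda>k. cf \<sigma> k * u^k)"
proof (rule summable_comparison_test)
  assume s: "\<sigma> \<ge> 0"
  have "norm (cf \<sigma> n * u ^ n) \<le> inverse (fact n) * \<bar>u\<bar> ^ n" for n
  proof -
    have "norm (cf \<sigma> n * u ^ n) = p \<sigma> n * \<bar>u\<bar> ^ n"
      using p_pos[OF s, of n] by (simp add: cf_def abs_mult power_abs)
    also have "\<dots> \<le> inverse (fact n) * \<bar>u\<bar> ^ n"
      using p_le[OF s, of n] by (intro mult_right_mono) (auto simp: divide_simps)
    finally show ?thesis .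
  qed
  then show "\<exists>N. \<forall>n\<ge>N. norm (cf \<sigma> n * u ^ n) \<le> inverse (fact n) * \<bar>u\<bar> ^ n" by blast
  show "summable (\<lambda>n. inverse (fact n) * \<bar>u\<bar> ^ n)" by (rule summable_exp)
qed



lemma p_Suc2: "p \<sigma> (Suc k) = p \<sigma> k / ((real k + 1) * (\<sigma> + 1 + real k))"
  unfolding p_def by (simp add: pochhammer_Suc algebra_simps)

lemma p_deriv: "x > 0 \<Longrightarrow> ((\<lambda>\<sigma>. p \<sigma> k) has_real_derivative (- p x k * SS x k)) (at x)"
proof (induction k)
  case 0
  then show ?case by (simp add: p_def SS_def)
next
  case (Suc k)
  have eq: "(\<lambda>\<sigma>. p \<sigma> (Suc k)) = (\<lambda>\<sigma>. p \<sigma> k / ((real k + 1) * (\<sigma> + 1 + real k)))"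
    by (simp add: p_Suc2)
  have d: "((\<lambda>\<sigma>. (real k + 1) * (\<sigma> + 1 + real k)) has_real_derivative (real k + 1)) (at x)"
    by (auto intro!: derivative_eq_intros)
  have nz: "(real k + 1) * (x + 1 + real k) \<noteq> 0" using Suc by auto
  have "((\<lambda>\<sigma>. p \<sigma> k / ((real k + 1) * (\<sigma> + 1 + real k))) has_real_derivative
     ((- p x k * SS x k) * ((real k + 1) * (x + 1 + real k)) - p x k * (real k + 1)) / ((real k + 1) * (x + 1 + real k))^2) (at x)"
    using DERIV_divide[OF Suc.IH[OF Suc.prems] d nz] by (simp add: power2_eq_square)
  moreover have "((- p x k * SS x k) * ((real k + 1) * (x + 1 + real k)) - p x k * (real k + 1)) / ((real k + 1) * (x + 1 + real k))^2
     = - p x (Suc k) * SS x (Suc k)"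
  proof -
    have a: "x + 1 + real k \<noteq> 0" "real k + 1 \<noteq> 0" using Suc.prems by auto
    have alg: "\<And>A B P S::real. A > 0 \<Longrightarrow> B > 0 \<Longrightarrow> (-(P*S)*(A*B) - P*A)/(A*B)^2 = -(P/(A*B))*(S+1/B)"
      by (simp add: field_simps power2_eq_square)
    have "real k + 1 > 0" "x + 1 + real k > 0" using Suc.prems by auto
    from alg[OF this, of "p x k" "SS x k"] show ?thesis by (simp add: p_Suc2 SS_Suc)
  qed
  ultimately show ?case by (simp add: eq)
qed

lemma cf_deriv: "x > 0 \<Longrightarrow> ((\<lambda>\<sigma>. cf \<sigma> k) has_real_derivative (- cf x k * SS x k)) (at x)"
  unfolding cf_def using DERIV_cmult[where c="(-1::real)^k", OF p_deriv[of x k]] by (simp add: mult.assoc)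

lemma cfu_deriv: "x > 0 \<Longrightarrow> ((\<lambda>\<sigma>. cf \<sigma> k * u^k) has_real_derivative (- cf x k * SS x k * u^k)) (at x)"
  using DERIV_mult[OF cf_deriv[of x k] DERIV_const] by simp

lemma series_deriv:
  fixes f f' :: "nat \<Rightarrow> real \<Rightarrow> real"
  assumes d: "\<And>n x. x > 0 \<Longrightarrow> ((\<lambda>\<sigma>. f n \<sigma>) has_real_derivative f' n x) (at x)"
    and b: "\<And>n x. x > 0 \<Longrightarrow> \<bar>f' n x\<bar> \<le> M n" and M: "summable M"
    and s: "\<And>x. x > 0 \<Longrightarrow> summable (\<lambda>n. f n x)" and x: "x > 0"
  shows "((\<lambda>\<sigma>. \<Sum>n. f n \<sigma>) has_real_derivative (\<Sum>n. f' n x)) (at x)"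
proof -
  have "interior {0::real<..} = {0<..}" by (simp add: interior_open)
  then have xi: "x \<in> interior {0::real<..}" using x by simp
  show ?thesis
  proof (rule has_field_derivative_series'(2)[of "{0<..}" f f' x x])
    show "convex {0::real<..}" by simp
    show "\<And>n y. y \<in> {0<..} \<Longrightarrow> (f n has_field_derivative f' n y) (at y within {0<..})"
      using d by (auto intro: has_field_derivative_at_within)
    show "uniformly_convergent_on {0<..} (\<lambda>n y. \<Sum>i<n. f' i y)"
      by (rule Weierstrass_m_test'[OF _ M]) (use b in auto)
  qed (use x xi s in auto)
qed

lemma nle2: "real n \<le> 2 ^ n"
proof -
  have "n < 2 ^ n" by (rule less_exp)
  then have "real n < real (2 ^ n)" by linarith
  then show ?thesis by simp
qed

lemma bound1:
  assumes "x > 0"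
  shows "\<bar>- cf x n * SS x n * u^n\<bar> \<le> inverse (fact n) * (2*\<bar>u\<bar>)^n"
proof -
  have x: "x \<ge> 0" using assms by simp
  have "\<bar>- cf x n * SS x n * u^n\<bar> = p x n * SS x n * \<bar>u\<bar>^n"
    using p_pos[OF x, of n] SS_nonneg[OF x, of n] by (simp add: cf_def abs_mult power_abs)
  also have "\<dots> \<le> (1 / fact n) * 2^n * \<bar>u\<bar>^n"
    using p_le[OF x, of n] p_pos[OF x, of n] order.trans[OF SS_le[OF x, of n] nle2[of n]] SS_nonneg[OF x, of n]
    by (intro mult_right_mono mult_mono) auto
  finally show ?thesis by (simp add: power_mult_distrib divide_simps)
qed

lemma bound2:
  assumes "x > 0"
  shows "\<bar>- diffs (cf x) n * SS x (Suc n) * u^n\<bar> \<le> inverse (fact n) * (2*\<bar>u\<bar>)^n"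
proof -
  have x: "x \<ge> 0" using assms by simp
  have "\<bar>- diffs (cf x) n * SS x (Suc n) * u^n\<bar> = (real n + 1) * p x (Suc n) * SS x (Suc n) * \<bar>u\<bar>^n"
    using p_pos[OF x, of "Suc n"] SS_nonneg[OF x, of "Suc n"] by (simp add: diffs_def cf_def abs_mult power_abs)
  also have "\<dots> = p x (Suc n) * fact (Suc n) * (SS x (Suc n) / fact n) * \<bar>u\<bar>^n"
    by (simp add: algebra_simps)
  also have "\<dots> \<le> 1 * (2^n / fact n) * \<bar>u\<bar>^n"
  proof (intro mult_right_mono mult_mono)
    show "p x (Suc n) * fact (Suc n) \<le> 1" using p_le[OF x, of "Suc n"] by (simp add: divide_simps)
    have "SS x (Suc n) \<le> real n + 1" using SS_le[OF x, of "Suc n"] by simp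
    also have "\<dots> \<le> 2^n" using nle2[of n]
      by (induction n) auto
    finally show "SS x (Suc n) / fact n \<le> 2^n / fact n" by (simp add: divide_right_mono)
  qed (use p_pos[OF x, of "Suc n"] SS_nonneg[OF x, of "Suc n"] in auto)
  finally show ?thesis by (simp add: power_mult_distrib divide_simps)
qed

lemma G_deriv_s: "x > 0 \<Longrightarrow> ((\<lambda>\<sigma>. G \<sigma> u) has_real_derivative Gs x u) (at x)"
  unfolding G_def Gs_def
  by (rule series_deriv[where M = "\<lambda>n. inverse (fact n) * (2*\<bar>u\<bar>)^n"
     and f = "\<lambda>k \<sigma>. cf \<sigma> k * u^k" and f' = "\<lambda>k x. - cf x k * SS x k * u^k"])
     (rule cfu_deriv, assumption, rule bound1, assumption, rule summable_exp, rule summ_cf, simp, assumption)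

lemma diffs_cf_deriv: "x > 0 \<Longrightarrow> ((\<lambda>\<sigma>. diffs (cf \<sigma>) n * u^n) has_real_derivative (- diffs (cf x) n * SS x (Suc n) * u^n)) (at x)"
  unfolding diffs_def using DERIV_cmult[where c="real (Suc n) * u^n", OF cf_deriv[of x "Suc n"]]
  by (simp add: algebra_simps)

lemma summ_diffs: "\<sigma> \<ge> 0 \<Longrightarrow> summable (\<lambda>k. diffs (cf \<sigma>) k * u^k)"
  by (rule termdiff_converges_all) (rule summ_cf)

lemma Gu_deriv_s: "x > 0 \<Longrightarrow> ((\<lambda>\<sigma>. Gu \<sigma> u) has_real_derivative Gus x u) (at x)"
  unfolding Gu_def Gus_def
  by (rule series_deriv[where M = "\<lambda>n. inverse (fact n) * (2*\<bar>u\<bar>)^n"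
     and f = "\<lambda>k \<sigma>. diffs (cf \<sigma>) k * u^k" and f' = "\<lambda>k x. - diffs (cf x) k * SS x (Suc k) * u^k"])
     (rule diffs_cf_deriv, assumption, rule bound2, assumption, rule summable_exp, rule summ_diffs, simp, assumption)

lemma G_deriv_u: "\<sigma> \<ge> 0 \<Longrightarrow> ((\<lambda>u. G \<sigma> u) has_real_derivative Gu \<sigma> u) (at u)"
  unfolding G_def Gu_def by (rule termdiffs_strong_converges_everywhere) (rule summ_cf)

lemma Gu_deriv_u: "\<sigma> \<ge> 0 \<Longrightarrow> ((\<lambda>u. Gu \<sigma> u) has_real_derivative (\<Sum>n. diffs (diffs (cf \<sigma>)) n * u^n)) (at u)"
  unfolding Gu_def by (rule termdiffs_strong_converges_everywhere) (rule summ_diffs)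

lemma G_cont: "\<sigma> \<ge> 0 \<Longrightarrow> isCont (G \<sigma>) u"
  using G_deriv_u DERIV_isCont by blast

lemma Gu_cont: "\<sigma> \<ge> 0 \<Longrightarrow> isCont (Gu \<sigma>) u"
  using Gu_deriv_u DERIV_isCont by blast



lemma leib:
  fixes a :: "nat \<Rightarrow> real"
  assumes pos: "\<And>n. 0 \<le> a n" and mono: "\<And>n. a (Suc n) \<le> a n" and sm: "summable a"
  shows "a 0 - a 1 \<le> (\<Sum>i. (-1)^i*a i)" "(\<Sum>i. (-1)^i*a i) \<le> a 0"
    "(\<Sum>i. (-1)^i*a i) \<le> a 0 - a 1 + a 2" "0 \<le> (\<Sum>i. (-1)^i*a i)"
proof -
  have z: "a \<longlonglongrightarrow> 0" by (rule summable_LIMSEQ_zero[OF sm])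
  note L = summable_Leibniz'[OF z pos mono]
  show "a 0 - a 1 \<le> (\<Sum>i. (-1)^i*a i)" using L(2)[of 1] by (simp add: numeral_2_eq_2)
  show "(\<Sum>i. (-1)^i*a i) \<le> a 0" using L(4)[of 0] by simp
  show "(\<Sum>i. (-1)^i*a i) \<le> a 0 - a 1 + a 2" using L(4)[of 1] by (simp add: numeral_3_eq_3 numeral_2_eq_2)
  show "0 \<le> (\<Sum>i. (-1)^i*a i)" using L(2)[of 0] by simp
qed

lemma p0: "p \<sigma> 0 = 1" by (simp add: p_def)

lemma p1: "\<sigma> \<ge> 0 \<Longrightarrow> p \<sigma> 1 = 1/(\<sigma>+1)"
  using p_Suc2[of \<sigma> 0] by (simp add: p_def)

lemma summ_M: "summable (\<lambda>n. inverse (fact n) * (2*\<bar>u::real\<bar>)^n)"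
  by (rule summable_exp)

context
  fixes \<sigma> u :: real
  assumes s1: "\<sigma> \<ge> 1" and u0: "0 \<le> u" and u1: "u \<le> 1"
begin

private lemma s0: "\<sigma> \<ge> 0" using s1 by simp

definition "aG k = p \<sigma> k * u^k"
definition "aGu k = (real k + 1) * p \<sigma> (Suc k) * u^k"
definition "aGs k = p \<sigma> (Suc k) * SS \<sigma> (Suc k) * u^(Suc k)"
definition "aGus k = (real k + 1) * p \<sigma> (Suc k) * SS \<sigma> (Suc k) * u^k"

lemma aG_nonneg: "aG k \<ge> 0" unfolding aG_def using p_pos[OF s0] u0 by (simp add: less_imp_le)
lemma aGu_nonneg: "aGu k \<ge> 0" unfolding aGu_def using p_pos[OF s0] u0 by (simp add: less_imp_le)
lemma aGs_nonneg: "aGs k \<ge> 0" unfolding aGs_def using p_pos[OF s0] u0 SS_nonneg[OF s0] by (simp add: less_imp_le)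
lemma aGus_nonneg: "aGus k \<ge> 0" unfolding aGus_def using p_pos[OF s0] u0 SS_nonneg[OF s0] by (simp add: less_imp_le)

lemma aG_mono: "aG (Suc k) \<le> aG k"
proof -
  have eq: "aG (Suc k) = aG k * (u / ((real k + 1) * (\<sigma> + 1 + real k)))"
    unfolding aG_def by (simp add: p_Suc2 field_simps)
  have "(real k + 1) * (\<sigma> + 1 + real k) \<ge> 1 * 1" using s1 by (intro mult_mono) auto
  then have "u / ((real k + 1) * (\<sigma> + 1 + real k)) \<le> 1" using u1 u0 by (simp add: divide_simps)
  from mult_left_le[OF this aG_nonneg[of k]] show ?thesis unfolding eq .
qed

lemma pSS: "p \<sigma> (Suc (Suc k)) = p \<sigma> (Suc k) / ((real k + 2) * (\<sigma> + 2 + real k))"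
  using p_Suc2[of \<sigma> "Suc k"] by (simp add: algebra_simps)

lemma aGu_mono: "aGu (Suc k) \<le> aGu k"
proof -
  have alg: "\<And>A B P U::real. A > 0 \<Longrightarrow> B > 0 \<Longrightarrow> A * (P/(A*B)) * (u*U) = P*U*(u/B)"
    by (simp add: field_simps)
  have eq: "aGu (Suc k) = p \<sigma> (Suc k) * u^k * (u / (\<sigma> + 2 + real k))"
    unfolding aGu_def pSS using alg[of "real k + 2" "\<sigma> + 2 + real k" "p \<sigma> (Suc k)" "u^k"] s1
    by (simp add: add_ac)
  have "1 * 1 \<le> (real k + 1) * (\<sigma> + 2 + real k)" using s1 by (intro mult_mono) auto
  then have "u / (\<sigma> + 2 + real k) \<le> real k + 1" using u1 u0 s1 by (simp add: divide_simps)
  then have "p \<sigma> (Suc k) * u^k * (u / (\<sigma> + 2 + real k)) \<le> p \<sigma> (Suc k) * u^k * (real k + 1)"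
    using p_pos[OF s0, of "Suc k"] u0 by (intro mult_left_mono) auto
  moreover have "p \<sigma> (Suc k) * u^k * (real k + 1) = aGu k" by (simp add: aGu_def mult_ac)
  ultimately show ?thesis using eq by linarith
qed

lemma SS_Suc_le: "SS \<sigma> (Suc (Suc k)) \<le> 2 * SS \<sigma> (Suc k)"
proof -
  have a: "SS \<sigma> (Suc k) \<ge> 1/(\<sigma>+1+real k)" using SS_Suc[of \<sigma> k] SS_nonneg[OF s0, of k] by simp
  have b: "1/(\<sigma>+1+real (Suc k)) \<le> 1/(\<sigma>+1+real k)" using s1 by (simp add: divide_simps)
  show ?thesis using SS_Suc[of \<sigma> "Suc k"] a b by simp
qed

lemma aGs_mono: "aGs (Suc k) \<le> aGs k"
proof -
  have eq: "aGs (Suc k) = p \<sigma> (Suc k) * u^(Suc k) * (u * SS \<sigma> (Suc (Suc k)) / ((real k + 2) * (\<sigma> + 2 + real k)))"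
  proof -
    have "\<sigma> + 2 + real k \<noteq> 0" "real k + 2 \<noteq> 0" using s1 by auto
    then show ?thesis unfolding aGs_def using p_Suc2[of \<sigma> "Suc k"] by (simp add: field_simps)
  qed
  have q: "(real k + 2) * (\<sigma> + 2 + real k) \<ge> 2 * 1" using s1 by (intro mult_mono) auto
  have "u * SS \<sigma> (Suc (Suc k)) \<le> 2 * SS \<sigma> (Suc k)"
    using SS_Suc_le u1 SS_nonneg[OF s0, of "Suc (Suc k)"] by (meson dual_order.trans mult_left_le_one_le u0)
  also have "\<dots> \<le> ((real k + 2) * (\<sigma> + 2 + real k)) * SS \<sigma> (Suc k)"
    using q SS_nonneg[OF s0, of "Suc k"] by (intro mult_right_mono) auto
  finally have "u * SS \<sigma> (Suc (Suc k)) / ((real k + 2) * (\<sigma> + 2 + real k)) \<le> SS \<sigma> (Suc k)"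
    using q by (simp add: divide_simps mult_ac)
  then have "p \<sigma> (Suc k) * u^(Suc k) * (u * SS \<sigma> (Suc (Suc k)) / ((real k + 2) * (\<sigma> + 2 + real k)))
      \<le> p \<sigma> (Suc k) * u^(Suc k) * SS \<sigma> (Suc k)"
    using p_pos[OF s0, of "Suc k"] u0 by (intro mult_left_mono) auto
  moreover have "p \<sigma> (Suc k) * u^(Suc k) * SS \<sigma> (Suc k) = aGs k" by (simp add: aGs_def mult_ac)
  ultimately show ?thesis using eq by linarith
qed

lemma aGus_mono: "aGus (Suc k) \<le> aGus k"
proof -
  have alg: "\<And>A B P U S::real. A > 0 \<Longrightarrow> B > 0 \<Longrightarrow> A * (P/(A*B)) * S * U = P*U*(S/B)"
    by (simp add: field_simps)
  have eq: "aGus (Suc k) = p \<sigma> (Suc k) * u^k * (u * SS \<sigma> (Suc (Suc k)) / (\<sigma> + 2 + real k))"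
    unfolding aGus_def pSS using alg[of "real k + 2" "\<sigma> + 2 + real k" "p \<sigma> (Suc k)" "u^(Suc k)" "SS \<sigma> (Suc (Suc k))"] s1
    by (simp add: add_ac mult_ac)
  have "u * SS \<sigma> (Suc (Suc k)) \<le> 2 * SS \<sigma> (Suc k)"
    using SS_Suc_le u1 SS_nonneg[OF s0, of "Suc (Suc k)"] by (meson dual_order.trans mult_left_le_one_le u0)
  also have "\<dots> \<le> (\<sigma> + 2 + real k) * (real k + 1) * SS \<sigma> (Suc k)"
  proof -
    have "(\<sigma> + 2 + real k) * (real k + 1) \<ge> 2 * 1" using s1 by (intro mult_mono) auto
    then show ?thesis using SS_nonneg[OF s0, of "Suc k"] by (intro mult_right_mono) auto
  qed
  finally have "u * SS \<sigma> (Suc (Suc k)) / (\<sigma> + 2 + real k) \<le> (real k + 1) * SS \<sigma> (Suc k)"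
    using s1 by (simp add: divide_simps mult_ac)
  then have "p \<sigma> (Suc k) * u^k * (u * SS \<sigma> (Suc (Suc k)) / (\<sigma> + 2 + real k))
      \<le> p \<sigma> (Suc k) * u^k * ((real k + 1) * SS \<sigma> (Suc k))"
    using p_pos[OF s0, of "Suc k"] u0 by (intro mult_left_mono) auto
  moreover have "p \<sigma> (Suc k) * u^k * ((real k + 1) * SS \<sigma> (Suc k)) = aGus k" by (simp add: aGus_def mult_ac)
  ultimately show ?thesis using eq by linarith
qed

lemma aG_summ: "summable aG"
proof (rule summable_comparison_test)
  show "summable (\<lambda>n. inverse (fact n) * u ^ n)" by (rule summable_exp)
  show "\<exists>N. \<forall>n\<ge>N. norm (aG n) \<le> inverse (fact n) * u ^ n"
  proof (intro exI allI impI)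
    fix n :: nat
    have "p \<sigma> n * u^n \<le> inverse (fact n) * u ^ n"
      using p_le[OF s0, of n] u0 by (intro mult_right_mono) (auto simp: divide_simps)
    then show "norm (aG n) \<le> inverse (fact n) * u ^ n" using aG_nonneg[of n] by (simp add: aG_def)
  qed
qed

lemma aGu_summ: "summable aGu"
proof (rule summable_comparison_test)
  show "summable (\<lambda>n. inverse (fact n) * u ^ n)" by (rule summable_exp)
  have "aGu n \<le> inverse (fact n) * u ^ n" for n
  proof -
    have "(real n + 1) * p \<sigma> (Suc n) \<le> (real n + 1) * (1 / fact (Suc n))"
      using p_le[OF s0, of "Suc n"] by (intro mult_left_mono) auto
    also have "\<dots> = inverse (fact n)" by (simp add: divide_simps)
    finally show ?thesis unfolding aGu_def using u0 by (intro mult_right_mono) auto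
  qed
  then show "\<exists>N. \<forall>n\<ge>N. norm (aGu n) \<le> inverse (fact n) * u ^ n"
    using aGu_nonneg by auto
qed

lemma aGs_summ: "summable aGs"
proof (rule summable_comparison_test)
  show "summable (\<lambda>n. inverse (fact (Suc n)) * (2*\<bar>u\<bar>) ^ (Suc n))"
    using summable_ignore_initial_segment[OF summ_M[of u], of 1] by simp
  have e: "norm (aGs n) = \<bar>- cf \<sigma> (Suc n) * SS \<sigma> (Suc n) * u^(Suc n)\<bar>" for n
    using aGs_nonneg[of n] by (simp add: aGs_def cf_def abs_mult power_abs del: power_Suc)
  have b: "\<sigma> > 0" using s1 by simp
  show "\<exists>N. \<forall>n\<ge>N. norm (aGs n) \<le> inverse (fact (Suc n)) * (2*\<bar>u\<bar>) ^ (Suc n)"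
  proof (intro exI allI impI)
    fix n :: nat
    show "norm (aGs n) \<le> inverse (fact (Suc n)) * (2*\<bar>u\<bar>) ^ (Suc n)"
      unfolding e by (rule bound1[OF b])
  qed
qed

lemma aGus_summ: "summable aGus"
proof (rule summable_comparison_test)
  show "summable (\<lambda>n. inverse (fact n) * (2*\<bar>u\<bar>) ^ n)" by (rule summ_M)
  have e: "norm (aGus n) = \<bar>- diffs (cf \<sigma>) n * SS \<sigma> (Suc n) * u^n\<bar>" for n
    using aGus_nonneg[of n] by (simp add: aGus_def diffs_def cf_def abs_mult power_abs)
  have b: "\<sigma> > 0" using s1 by simp
  show "\<exists>N. \<forall>n\<ge>N. norm (aGus n) \<le> inverse (fact n) * (2*\<bar>u\<bar>) ^ n"
  proof (intro exI allI impI)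
    fix n :: nat
    show "norm (aGus n) \<le> inverse (fact n) * (2*\<bar>u\<bar>) ^ n"
      unfolding e by (rule bound2[OF b])
  qed
qed

lemma G_eq: "G \<sigma> u = (\<Sum>k. (-1)^k * aG k)"
  unfolding G_def aG_def cf_def by (simp add: mult_ac)

lemma Gu_eq: "Gu \<sigma> u = - (\<Sum>k. (-1)^k * aGu k)"
proof -
  have s: "summable (\<lambda>k. (-1)^k * aGu k)" using summable_Leibniz'(1)[OF summable_LIMSEQ_zero[OF aGu_summ] aGu_nonneg aGu_mono] .
  have "Gu \<sigma> u = (\<Sum>k. - ((-1)^k * aGu k))"
    unfolding Gu_def aGu_def diffs_def cf_def by (simp add: mult_ac add_ac)
  also have "\<dots> = - (\<Sum>k. (-1)^k * aGu k)" by (rule suminf_minus[OF s])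
  finally show ?thesis .
qed

lemma Gs_eq: "Gs \<sigma> u = (\<Sum>k. (-1)^k * aGs k)"
proof -
  let ?f = "\<lambda>k. - cf \<sigma> k * SS \<sigma> k * u^k"
  have sm: "summable ?f"
  proof (rule summable_comparison_test[OF _ summ_M[of u]])
    have b: "\<sigma> > 0" using s1 by simp
    show "\<exists>N. \<forall>n\<ge>N. norm (?f n) \<le> inverse (fact n) * (2*\<bar>u\<bar>) ^ n"
      using bound1[OF b] by (simp only: real_norm_def) blast
  qed
  have "(\<Sum>k. ?f (Suc k)) = suminf ?f - ?f 0" by (rule suminf_split_head[OF sm])
  moreover have "?f 0 = 0" by (simp add: SS_def)
  moreover have "?f (Suc k) = (-1)^k * aGs k" for k by (simp add: aGs_def cf_def mult_ac)
  ultimately show ?thesis unfolding Gs_def by simp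
qed

lemma Gus_eq: "Gus \<sigma> u = (\<Sum>k. (-1)^k * aGus k)"
  unfolding Gus_def aGus_def diffs_def cf_def by (simp add: mult_ac add_ac)

lemma G_lb: "1 - u/(\<sigma>+1) \<le> G \<sigma> u"
  using leib(1)[OF aG_nonneg aG_mono aG_summ] p1[OF s0] p0 unfolding G_eq by (simp add: aG_def)
lemma G_ub: "G \<sigma> u \<le> 1 - u/(\<sigma>+1) + p \<sigma> 2 * u^2"
  using leib(3)[OF aG_nonneg aG_mono aG_summ] p1[OF s0] p0 unfolding G_eq by (simp add: aG_def)
lemma Gu_lb: "- 1/(\<sigma>+1) \<le> Gu \<sigma> u"
  using leib(2)[OF aGu_nonneg aGu_mono aGu_summ] p1[OF s0] p0 unfolding Gu_eq by (simp add: aGu_def)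
lemma Gu_ub: "Gu \<sigma> u \<le> - 1/(\<sigma>+1) + 2 * p \<sigma> 2 * u"
  using leib(1)[OF aGu_nonneg aGu_mono aGu_summ] p1[OF s0] p0 unfolding Gu_eq by (simp add: aGu_def numeral_2_eq_2)
lemma Gu_nonpos: "Gu \<sigma> u \<le> 0"
  using leib(4)[OF aGu_nonneg aGu_mono aGu_summ] unfolding Gu_eq by simp
lemma Gs_nonneg: "Gs \<sigma> u \<ge> 0"
  using leib(4)[OF aGs_nonneg aGs_mono aGs_summ] unfolding Gs_eq by simp
lemma Gus_nonneg: "Gus \<sigma> u \<ge> 0"
  using leib(4)[OF aGus_nonneg aGus_mono aGus_summ] unfolding Gus_eq by simp

end



definition H :: "real \<Rightarrow> real \<Rightarrow> real" where
  "H \<sigma> u = \<sigma> * G \<sigma> u + 2 * u * Gu \<sigma> u"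

lemma rGamma_shift: "\<sigma> \<ge> 0 \<Longrightarrow> rGamma (real k + \<sigma> + 1) = rGamma (\<sigma>+1) / pochhammer (\<sigma>+1) k"
proof -
  assume s: "\<sigma> \<ge> 0"
  have "rGamma (\<sigma>+1) = pochhammer (\<sigma>+1) k * rGamma (\<sigma>+1 + of_nat k)" by (rule pochhammer_rGamma)
  moreover have "pochhammer (\<sigma>+1) k \<noteq> 0" using poch_ge1[OF s, of k] by auto
  ultimately show ?thesis by (simp add: field_simps add_ac)
qed

lemma J_eq:
  assumes s: "\<sigma> \<ge> 0" and t: "t > 0"
  shows "besselJ \<sigma> t = (t/2) powr \<sigma> * rGamma (\<sigma>+1) * G \<sigma> (t^2/4)"
proof -
  let ?C = "(t/2) powr \<sigma> * rGamma (\<sigma>+1)"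
  have trm: "(-1) ^ k * rGamma (real k + \<sigma> + 1) / fact k * (t / 2) powr (2 * real k + \<sigma>)
      = ?C * (cf \<sigma> k * (t^2/4)^k)" for k
  proof -
    have pr: "(t/2) powr (real (2*k)) = (t/2)^(2*k)" by (rule powr_realpow) (use t in simp)
    have pm: "(t/2)^(2*k) = (t^2/4)^k" by (simp add: power_mult power_divide)
    have "(t / 2) powr (2 * real k + \<sigma>) = (t/2) powr (real (2*k)) * (t/2) powr \<sigma>"
      by (simp add: powr_add)
    also have "\<dots> = (t^2/4)^k * (t/2) powr \<sigma>"
      unfolding pr pm ..
    finally have e: "(t / 2) powr (2 * real k + \<sigma>) = (t^2/4)^k * (t/2) powr \<sigma>" .
    show ?thesis unfolding e rGamma_shift[OF s] cf_def p_def by (simp add: field_simps)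
  qed
  have "besselJ \<sigma> t = (\<Sum>k. ?C * (cf \<sigma> k * (t^2/4)^k))"
    unfolding besselJ_def trm ..
  also have "\<dots> = ?C * G \<sigma> (t^2/4)"
    unfolding G_def by (rule suminf_mult[OF summ_cf[OF s]])
  finally show ?thesis .
qed

lemma J_deriv:
  assumes s: "\<sigma> \<ge> 0" and t: "t > 0"
  shows "(besselJ \<sigma> has_real_derivative
     (\<sigma> * (t/2) powr \<sigma> / t * rGamma (\<sigma>+1) * G \<sigma> (t^2/4) + (t/2) powr \<sigma> * rGamma (\<sigma>+1) * (Gu \<sigma> (t^2/4) * (t/2)))) (at t)"
proof -
  have p: "((\<lambda>x. (x/2) powr \<sigma>) has_real_derivative \<sigma> * (t/2) powr \<sigma> / t) (at t)"
  proof -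
    have d: "((\<lambda>x. x/2) has_real_derivative 1/2) (at t)" by (auto intro!: derivative_eq_intros)
    have "((\<lambda>x. (x/2) powr \<sigma>) has_real_derivative \<sigma> * (t/2) powr (\<sigma> - of_nat 1) * (1/2)) (at t)"
      by (rule DERIV_fun_powr[OF d]) (use t in simp)
    moreover have "\<sigma> * (t/2) powr (\<sigma> - of_nat 1) * (1/2) = \<sigma> * (t/2) powr \<sigma> / t"
      using t by (simp add: powr_diff field_simps)
    ultimately show ?thesis by simp
  qed
  have g: "((\<lambda>x. G \<sigma> (x^2/4)) has_real_derivative Gu \<sigma> (t^2/4) * (t/2)) (at t)"
  proof (rule DERIV_chain2[OF G_deriv_u[OF s]])
    show "((\<lambda>x. x^2/4) has_real_derivative t/2) (at t)" by (auto intro!: derivative_eq_intros)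
  qed
  have all: "((\<lambda>x. (x/2) powr \<sigma> * rGamma (\<sigma>+1) * G \<sigma> (x^2/4)) has_real_derivative
     (\<sigma> * (t/2) powr \<sigma> / t * rGamma (\<sigma>+1) * G \<sigma> (t^2/4) + (t/2) powr \<sigma> * rGamma (\<sigma>+1) * (Gu \<sigma> (t^2/4) * (t/2)))) (at t)"
    by (rule DERIV_cong[OF DERIV_mult[OF DERIV_mult[OF p DERIV_const[of "rGamma (\<sigma>+1)"]] g]]) (simp add: algebra_simps)
  show ?thesis
    by (rule has_field_derivative_transform_within_open[OF all, of "{0<..}"]) (use t J_eq[OF s] in auto)
qed

lemma J'_eq:
  assumes s: "\<sigma> \<ge> 0" and t: "t > 0"
  shows "t * besselJ' \<sigma> t = (t/2) powr \<sigma> * rGamma (\<sigma>+1) * H \<sigma> (t^2/4)"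
proof -
  have "besselJ' \<sigma> t = \<sigma> * (t/2) powr \<sigma> / t * rGamma (\<sigma>+1) * G \<sigma> (t^2/4) + (t/2) powr \<sigma> * rGamma (\<sigma>+1) * (Gu \<sigma> (t^2/4) * (t/2))"
    unfolding besselJ'_def by (rule DERIV_imp_deriv[OF J_deriv[OF s t]])
  then show ?thesis using t unfolding H_def by (simp add: field_simps power2_eq_square)
qed

lemma ratio_eq:
  assumes s: "\<sigma> \<ge> 0" and t: "t > 0"
  shows "besselJ \<sigma> t / (t * besselJ' \<sigma> t) = G \<sigma> (t^2/4) / H \<sigma> (t^2/4)"
proof -
  have "(t/2) powr \<sigma> * rGamma (\<sigma>+1) \<noteq> 0"
  proof -
    have "Gamma (\<sigma>+1) > 0" using s by (intro Gamma_real_pos) simp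
    then show ?thesis using t by (simp add: rGamma_inverse_Gamma)
  qed
  then show ?thesis unfolding J_eq[OF s t] J'_eq[OF s t] by simp
qed

lemma J'_sign:
  assumes t: "t > 0"
  shows "besselJ' 1 t > 0 \<longleftrightarrow> H 1 (t^2/4) > 0" "besselJ' 1 t = 0 \<longleftrightarrow> H 1 (t^2/4) = 0"
proof -
  have r2: "rGamma (2::real) = 1" using rGamma_plus1[of "1::real"] by simp
  have e: "t * besselJ' 1 t = (t/2) * H 1 (t^2/4)"
    using J'_eq[of 1 t] t r2 by simp
  show "besselJ' 1 t > 0 \<longleftrightarrow> H 1 (t^2/4) > 0"
    using e t by (metis half_gt_zero mult_pos_pos zero_less_mult_pos)
  show "besselJ' 1 t = 0 \<longleftrightarrow> H 1 (t^2/4) = 0"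
    using e t by auto
qed



lemma p12: "p 1 2 = 1/12"
  using p_Suc2[of 1 1] p1[of 1] by (simp add: numeral_2_eq_2)

lemma H1_lb: "0 \<le> u \<Longrightarrow> u \<le> 1 \<Longrightarrow> H 1 u \<ge> 1 - 3*u/2"
proof -
  assume u: "0 \<le> u" "u \<le> 1"
  have a: "1 - u/2 \<le> G 1 u" using G_lb[of 1 u] u by simp
  have b: "-1/2 \<le> Gu 1 u" using Gu_lb[of 1 u] u by simp
  have "2*u*(-1/2) \<le> 2*u*Gu 1 u" using b u by (intro mult_left_mono) auto
  then show ?thesis using a unfolding H_def by simp
qed

lemma H11_neg: "H 1 1 < 0"
proof -
  have a: "G 1 1 \<le> 1 - 1/2 + 1/12" using G_ub[of 1 1] p12 by simp
  have b: "Gu 1 1 \<le> -1/2 + 2/12" using Gu_ub[of 1 1] p12 by simp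
  show ?thesis using a b unfolding H_def by simp
qed

lemma phi_cont: "isCont (\<lambda>x. H 1 (x^2/4)) x"
proof -
  have c: "isCont (\<lambda>x::real. x^2/4) x" by (auto intro!: continuous_intros)
  have g: "isCont (\<lambda>x. G 1 (x^2/4)) x"
    by (rule isCont_o2[OF c]) (rule G_cont, simp)
  have gu: "isCont (\<lambda>x. Gu 1 (x^2/4)) x"
    by (rule isCont_o2[OF c]) (rule Gu_cont, simp)
  show ?thesis unfolding H_def using g gu by (auto intro!: continuous_intros)
qed

definition "Z = {x. 0 < x \<and> besselJ' 1 x = 0}"

lemma Z_bdd: "bdd_below Z" unfolding Z_def by (rule bdd_belowI[of _ 0]) auto

lemma j1'_le2: "j1' \<le> 2"
proof -
  have "\<exists>x. 1 \<le> x \<and> x \<le> 2 \<and> H 1 (x^2/4) = 0"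
  proof (rule IVT2)
    show "H 1 (2^2/4) \<le> 0" using H11_neg by simp
    show "0 \<le> H 1 (1^2/4)" using H1_lb[of "1/4"] by simp
  qed (auto intro: phi_cont)
  then obtain x where x: "1 \<le> x" "x \<le> 2" "H 1 (x^2/4) = 0" by blast
  then have "x \<in> Z" unfolding Z_def using J'_sign(2)[of x] by auto
  then have "j1' \<le> x" unfolding j1'_def Z_def[symmetric] by (rule cInf_lower[OF _ Z_bdd])
  then show ?thesis using x by simp
qed

lemma H1_pos:
  assumes t: "0 < t" "t < j1'"
  shows "H 1 (t^2/4) > 0"
proof (rule ccontr)
  assume neg: "\<not> H 1 (t^2/4) > 0"
  show False
  proof (cases "t \<le> 1")
    case True
    have "t^2 \<le> 1^2" using True t by (intro power_mono) auto
    then have "t^2/4 \<le> 1/4" by simp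
    then show False using H1_lb[of "t^2/4"] neg by simp
  next
    case False
    have "\<exists>x. 1 \<le> x \<and> x \<le> t \<and> H 1 (x^2/4) = 0"
    proof (rule IVT2)
      show "H 1 (t^2/4) \<le> 0" using neg by simp
      show "0 \<le> H 1 (1^2/4)" using H1_lb[of "1/4"] by simp
    qed (use False in \<open>auto intro: phi_cont\<close>)
    then obtain x where x: "1 \<le> x" "x \<le> t" "H 1 (x^2/4) = 0" by blast
    then have "x \<in> Z" unfolding Z_def using J'_sign(2)[of x] by auto
    then have "j1' \<le> x" unfolding j1'_def Z_def[symmetric] by (rule cInf_lower[OF _ Z_bdd])
    then show False using x t by simp
  qed
qed

lemma H_deriv_s: "x > 0 \<Longrightarrow> ((\<lambda>\<sigma>. H \<sigma> u) has_real_derivative (G x u + x * Gs x u + 2*u*Gus x u)) (at x)"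
  unfolding H_def
  by (rule DERIV_cong[OF DERIV_add[OF DERIV_mult[OF DERIV_ident G_deriv_s] DERIV_cmult[OF Gu_deriv_s]]]) auto

lemma key_pos:
  assumes "1 \<le> \<sigma>" "0 \<le> u" "u \<le> 1"
  shows "G \<sigma> u ^ 2 + 2*u*(Gus \<sigma> u * G \<sigma> u - Gu \<sigma> u * Gs \<sigma> u) > 0"
proof -
  have g: "G \<sigma> u > 0"
  proof -
    have "u/(\<sigma>+1) \<le> 1/2" using assms by (simp add: divide_simps)
    then show ?thesis using G_lb[OF assms] by simp
  qed
  have "Gus \<sigma> u * G \<sigma> u \<ge> 0" using Gus_nonneg[OF assms] g by simp
  moreover have "Gu \<sigma> u * Gs \<sigma> u \<le> 0" using Gu_nonpos[OF assms] Gs_nonneg[OF assms]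
    by (simp add: mult_nonpos_nonneg)
  ultimately have "2*u*(Gus \<sigma> u * G \<sigma> u - Gu \<sigma> u * Gs \<sigma> u) \<ge> 0" using assms by simp
  then show ?thesis using g by (simp add: add_pos_nonneg)
qed

lemma G_pos: "1 \<le> \<sigma> \<Longrightarrow> 0 \<le> u \<Longrightarrow> u \<le> 1 \<Longrightarrow> G \<sigma> u > 0"
proof -
  assume a: "1 \<le> \<sigma>" "0 \<le> u" "u \<le> 1"
  have "u/(\<sigma>+1) \<le> 1/2" using a by (simp add: divide_simps)
  then show ?thesis using G_lb[OF a] by simp
qed

lemma H_pos:
  assumes s: "1 \<le> s" and u: "0 \<le> u" "u \<le> 1" and h1: "H 1 u > 0"
  shows "H s u > 0"
proof (cases "s = 1")
  case True then show ?thesis using h1 by simp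
next
  case False
  then have s1: "1 < s" using s by simp
  let ?h = "\<lambda>\<sigma>. H \<sigma> u / G \<sigma> u"
  have "?h 1 < ?h s"
  proof (rule DERIV_pos_imp_increasing[OF s1])
    fix x assume x: "1 \<le> x" "x \<le> s"
    have gx: "G x u \<noteq> 0" using G_pos[OF x(1) u] by simp
    have D: "DERIV ?h x :> ((G x u + x * Gs x u + 2*u*Gus x u) * G x u - H x u * Gs x u) / (G x u * G x u)"
      by (rule DERIV_divide[OF H_deriv_s G_deriv_s gx]) (use x in auto)
    have "(G x u + x * Gs x u + 2*u*Gus x u) * G x u - H x u * Gs x u
        = G x u ^ 2 + 2*u*(Gus x u * G x u - Gu x u * Gs x u)"
      unfolding H_def by (simp add: algebra_simps power2_eq_square)
    then have "((G x u + x * Gs x u + 2*u*Gus x u) * G x u - H x u * Gs x u) / (G x u * G x u) > 0"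
      using key_pos[OF x(1) u] G_pos[OF x(1) u] by (intro divide_pos_pos mult_pos_pos) auto
    then show "\<exists>y. DERIV ?h x :> y \<and> 0 < y" using D by blast
  qed
  moreover have "?h 1 > 0" using h1 G_pos[of 1 u] u by simp
  ultimately have "?h s > 0" by simp
  then show ?thesis using G_pos[OF s u] by (simp add: zero_less_divide_iff)
qed

theorem lemma6p1:
  fixes t s :: real
  assumes "0 < t" and "t < j1'" and "1 \<le> s"
  shows "\<exists>D. ((\<lambda>\<sigma>. besselJ \<sigma> t / (t * besselJ' \<sigma> t)) has_real_derivative D) (at s) \<and> D < 0"
proof -
  define u where "u = t^2/4"
  have t2: "t < 2" using assms j1'_le2 by simp
  have u0: "0 \<le> u" unfolding u_def by simp
  have u1: "u \<le> 1"
  proof -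
    have "t^2 \<le> 2^2" using t2 assms by (intro power_mono) auto
    then show ?thesis unfolding u_def by simp
  qed
  have h1: "H 1 u > 0" unfolding u_def by (rule H1_pos) (use assms in auto)
  have hs: "H s u > 0" by (rule H_pos[OF assms(3) u0 u1 h1])
  have s0: "s > 0" using assms by simp
  let ?D = "(Gs s u * H s u - G s u * (G s u + s * Gs s u + 2*u*Gus s u)) / (H s u * H s u)"
  have D: "((\<lambda>\<sigma>. G \<sigma> u / H \<sigma> u) has_real_derivative ?D) (at s)"
    by (rule DERIV_divide[OF G_deriv_s[OF s0] H_deriv_s[OF s0]]) (use hs in simp)
  have num: "Gs s u * H s u - G s u * (G s u + s * Gs s u + 2*u*Gus s u)
      = - (G s u ^ 2 + 2*u*(Gus s u * G s u - Gu s u * Gs s u))"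
    unfolding H_def by (simp add: algebra_simps power2_eq_square)
  have neg: "?D < 0"
    unfolding num using key_pos[OF assms(3) u0 u1] hs by (simp add: divide_neg_pos)
  have D': "((\<lambda>\<sigma>. besselJ \<sigma> t / (t * besselJ' \<sigma> t)) has_real_derivative ?D) (at s)"
    by (rule has_field_derivative_transform_within_open[OF D, of "{0<..}"])
       (use s0 ratio_eq assms(1) in \<open>auto simp: u_def\<close>)
  show ?thesis using D' neg by blast
qed

end
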